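(* Let $n,k,\ell_{max}$ be positive integers, $F\subseteq\{1,\dots,n\}$ with $|F|=k$, $\varepsilon\in(0,1]$, $b$ a positive integer, and $\eta=\frac1{4k}$. Let $\sigma=\frac{4}{3\eta k}\,\ell_{max}\log_2 k+\frac{3}{\eta k\varepsilon}+\frac{b\log_2 k}{\log_2(16/15)}$. Let $x(t)\in\{0,1\}^n$ satisfy, for every $t\ge0$, $x_i(t)=1$ for $i\in F$ and $x_i(t)=0$ for $i\notin F$. Let $w_i(0)=\frac{1}{k^{\ell_{max}}}$ for all $i$, and for $t\ge1$ let $w(t)=w(t-1)+\eta\,z(t-1)\big(x(t-1)-z(t-1)w(t-1)\big)$ with $z(t-1)=w(t-1)\cdot x(t-1)$. Then for every $t\ge\sigma$: (1) for every $i\in F$, $w_i(t)\in\left[\frac{1}{(1+\varepsilon)\sqrt k},\frac1{\sqrt k}\right]$; (2) for every $i\notin F$, $w_i(t)\le\frac{1}{k^{\ell_{max}+b}}$.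
   Context: This describes a single neuron engaged in learning (Oja's rule) at every step, always receiving the same input vector in which exactly the coordinates in $F$ are $1$. In particular $\sigma=O\!\left(\frac1{\eta k}\left(\ell_{max}\log k+\frac1\varepsilon\right)+b\log k\right)$. *)

theory Defs
  imports Complex_Main
begin

end

theory Submission
  imports Defs
begin

fun vs :: "real \<Rightarrow> nat \<Rightarrow> real" where
  "vs a 0 = a"
| "vs a (Suc t) = vs a t + vs a t * (1 - (vs a t)^2) / 4"

lemma vs_bounds: assumes "0 < a" "a \<le> 1" shows "0 < vs a t \<and> vs a t \<le> 1"
proof (induction t)
  case 0 then show ?case using assms by simp
next
  case (Suc t)
  let ?v = "vs a t"
  have h: "0 < ?v" "?v \<le> 1" using Suc by auto
  have "0 < ?v + ?v * (1 - ?v^2) / 4" using h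
    by (smt (verit, ccfv_SIG) divide_nonneg_pos mult_nonneg_nonneg power_le_one)
  moreover have "?v + ?v * (1 - ?v^2) / 4 \<le> 1"
  proof -
    have "?v^2 \<le> 1" using h by (simp add: power_le_one)
    then have "0 \<le> (1 - ?v) * (4 - ?v - ?v^2)" using h by (intro mult_nonneg_nonneg) auto
    moreover have "(1 - ?v) * (4 - ?v - ?v^2) = 4 - 4 * (?v + ?v * (1 - ?v^2) / 4)"
      by (simp add: field_simps power2_eq_square)
    ultimately have "0 \<le> 4 - 4 * (?v + ?v * (1 - ?v^2) / 4)" by metis
    then show ?thesis by argo
  qed
  ultimately show ?case by simp
qed

lemma vs_mono_step: assumes "0 < a" "a \<le> 1" shows "vs a t \<le> vs a (Suc t)"
proof -
  have h: "0 < vs a t" "vs a t \<le> 1" using vs_bounds[OF assms] by auto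
  have "0 \<le> vs a t * (1 - (vs a t)^2) / 4" using h by (simp add: power_le_one)
  then show ?thesis by simp
qed

lemma vs_mono: assumes "0 < a" "a \<le> 1" "s \<le> t" shows "vs a s \<le> vs a t"
  using vs_mono_step[OF assms(1,2)] assms(3) by (rule lift_Suc_mono_le)

lemma vs_grow: assumes "0 < a" "a \<le> 1" shows "min (1/2) (a * (19/16)^t) \<le> vs a t"
proof (induction t)
  case 0 then show ?case by simp
next
  case (Suc t)
  let ?v = "vs a t"
  have h: "0 < ?v" "?v \<le> 1" using vs_bounds[OF assms] by auto
  show ?case
  proof (cases "?v \<ge> 1/2")
    case True
    then show ?thesis using vs_mono_step[OF assms, of t] by linarith
  next
    case False
    then have "a * (19/16)^t \<le> ?v" using Suc by linarith
    moreover have "?v * (19/16) \<le> vs a (Suc t)"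
    proof -
      have "?v * ?v \<le> (1/2) * (1/2)" using False h by (intro mult_mono) auto
      then have "?v^2 \<le> 1/4" by (simp add: power2_eq_square)
      then have "?v * (3/4) \<le> ?v * (1 - ?v^2)" using h by (intro mult_left_mono) auto
      then show ?thesis by simp
    qed
    ultimately have "a * (19/16)^Suc t \<le> vs a (Suc t)" by simp
    then show ?thesis by linarith
  qed
qed

lemma vs_conv: assumes "0 < a" "a \<le> 1" "1/2 \<le> vs a t0"
  shows "1 - vs a (t0 + m) \<le> (1 - vs a t0) * (13/16)^m"
proof (induction m)
  case 0 then show ?case by simp
next
  case (Suc m)
  let ?v = "vs a (t0 + m)"
  have h: "0 < ?v" "?v \<le> 1" using vs_bounds[OF assms(1,2)] by auto
  have hv: "1/2 \<le> ?v" using vs_mono[OF assms(1,2), of t0 "t0+m"] assms(3) by simp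
  have "1 - vs a (t0 + Suc m) = (1 - ?v) * (1 - ?v * (1 + ?v) / 4)"
    by (simp add: power2_eq_square algebra_simps)
  also have "\<dots> \<le> (1 - ?v) * (13/16)"
  proof -
    have "(1/2) * (3/2) \<le> ?v * (1 + ?v)" using hv by (intro mult_mono) auto
    then have "1 - ?v * (1 + ?v) / 4 \<le> 13/16" by simp
    then show ?thesis using h by (intro mult_left_mono) auto
  qed
  also have "\<dots> \<le> (1 - vs a t0) * (13/16)^m * (13/16)" using Suc by simp
  finally show ?case by simp
qed

theorem mainTheorem10:
  fixes n k lmax b :: nat and F :: "nat set" and \<epsilon> \<eta> \<sigma> :: real
    and x w :: "nat \<Rightarrow> nat \<Rightarrow> real" and z :: "nat \<Rightarrow> real"
  assumes n_pos: "n > 0" and k_pos: "k > 0" and l_pos: "lmax > 0" and b_pos: "b > 0"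
    and F_sub: "F \<subseteq> {1..n}" and F_card: "card F = k"
    and eps: "0 < \<epsilon>" "\<epsilon> \<le> 1"
    and eta_def: "\<eta> = 1 / (4 * real k)"
    and sigma_def: "\<sigma> = 4 / (3 * \<eta> * real k) * real lmax * log 2 (real k)
                 + 3 / (\<eta> * real k * \<epsilon>)
                 + real b * log 2 (real k) / log 2 (16 / 15)"
    and x_def: "\<And>t i. i \<in> {1..n} \<Longrightarrow> x t i = (if i \<in> F then 1 else 0)"
    and w0: "\<And>i. i \<in> {1..n} \<Longrightarrow> w 0 i = 1 / real k ^ lmax"
    and z_def: "\<And>t. z t = (\<Sum>j\<in>{1..n}. w t j * x t j)"
    and w_step: "\<And>t i. i \<in> {1..n} \<Longrightarrow>
                   w (Suc t) i = w t i + \<eta> * z t * (x t i - z t * w t i)"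
  shows "\<forall>t. real t \<ge> \<sigma> \<longrightarrow>
           (\<forall>i\<in>F. 1 / ((1 + \<epsilon>) * sqrt (real k)) \<le> w t i \<and> w t i \<le> 1 / sqrt (real k))
         \<and> (\<forall>i\<in>{1..n} - F. w t i \<le> 1 / real k ^ (lmax + b))"
proof -
  define sk where "sk = sqrt (real k)"
  define a where "a = sk / real k ^ lmax"
  have k1: "real k \<ge> 1" using k_pos by simp
  have sk_pos: "sk > 0" and sk1: "sk \<ge> 1" using k1 by (auto simp: sk_def)
  have sk2: "sk * sk = real k" using k1 by (simp add: sk_def)
  have kl_pos: "real k ^ lmax > 0" using k1 by simp
  have a_pos: "a > 0" using sk_pos kl_pos by (simp add: a_def)
  have sk_le: "sk \<le> real k" using sk2 sk1 mult_left_mono[of 1 sk sk] by simp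
  have "real k \<le> real k ^ lmax" using k1 l_pos by (metis One_nat_def Suc_leI power_increasing power_one_right)
  then have "sk \<le> real k ^ lmax" using sk_le by linarith
  then have a_le: "a \<le> 1" using kl_pos by (simp add: a_def)
  note vb = vs_bounds[OF a_pos a_le]
  have FF: "finite F" using F_sub finite_subset by blast
  have x1: "\<And>t i. i \<in> F \<Longrightarrow> x t i = 1" using x_def F_sub by auto
  have x0: "\<And>t i. i \<in> {1..n} - F \<Longrightarrow> x t i = 0" using x_def by auto
  have zsum: "z t = (\<Sum>j\<in>F. w t j)" for t
  proof -
    have "z t = (\<Sum>j\<in>{1..n}. if j \<in> F then w t j else 0)"
      unfolding z_def by (rule sum.cong) (auto simp: x_def)
    also have "\<dots> = (\<Sum>j\<in>F. w t j)"
      using F_sub by (simp add: sum.If_cases Int_absorb1)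
    finally show ?thesis .
  qed
  have wF: "\<forall>i\<in>F. w t i = vs a t / sk" for t
  proof (induction t)
    case 0
    then show ?case using w0 F_sub sk_pos by (auto simp: a_def)
  next
    case (Suc t)
    have zt: "z t = sk * vs a t"
      using Suc FF by (simp add: zsum F_card sk2[symmetric])
    show ?case
    proof
      fix i assume iF: "i \<in> F"
      then have i1: "i \<in> {1..n}" using F_sub by auto
      have "w (Suc t) i = vs a t / sk + \<eta> * (sk * vs a t) * (1 - sk * vs a t * (vs a t / sk))"
        using w_step[OF i1] Suc iF zt x1[OF iF] by simp
      also have "\<dots> = vs a (Suc t) / sk"
        using sk_pos sk2 by (simp add: eta_def field_simps power2_eq_square sk2[symmetric])
      finally show "w (Suc t) i = vs a (Suc t) / sk" .
    qed
  qed
  have zt: "z t = sk * vs a t" for t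
    using wF[of t] FF by (simp add: zsum F_card sk2[symmetric])
  have wN: "w (Suc t) i = w t i * (1 - (vs a t)^2 / 4)" if "i \<in> {1..n} - F" for t i
  proof -
    have "w (Suc t) i = w t i - \<eta> * (sk * vs a t) * (sk * vs a t) * w t i"
      using w_step[of i t] that x0[OF that] zt[of t] by simp
    also have "\<dots> = w t i * (1 - (vs a t)^2 / 4)"
      using sk_pos k1 by (simp add: eta_def field_simps power2_eq_square sk2[symmetric])
    finally show ?thesis .
  qed
  define A where "A = 16/3 * real lmax * log 2 (real k)"
  define C where "C = real b * log 2 (real k) / log 2 (16 / 15)"
  have logk: "log 2 (real k) \<ge> 0" using k1 by simp
  have A0: "A \<ge> 0" using logk by (simp add: A_def)
  have C0: "C \<ge> 0" using logk by (simp add: C_def)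
  have sig: "\<sigma> = A + 12 / \<epsilon> + C"
  proof -
    have ek: "\<eta> * real k = 1/4" using k1 by (simp add: eta_def)
    have e1: "3 / (\<eta> * real k * \<epsilon>) = 12 / \<epsilon>" by (simp add: ek)
    have e3: "3 * \<eta> * real k = 3/4" using ek by (simp only: mult.assoc)
    have e2: "4 / (3 * \<eta> * real k) = 16/3" by (simp only: e3) simp
    show ?thesis unfolding sigma_def A_def C_def by (simp only: e1 e2)
  qed
  define N1 where "N1 = nat \<lceil>A\<rceil>"
  have N1e: "real N1 = of_int \<lceil>A\<rceil>" using A0 by (simp add: N1_def)
  have N1A: "real N1 < A + 1" "A \<le> real N1" unfolding N1e using ceiling_correct[of A] by linarith+
  have base: "(2::real) \<le> (19/16) powr (16/3)"
  proof -
    have "((19/16::real) powr (16/3)) ^ 3 = ((19/16::real) powr (16/3)) powr (real 3)"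
      by (subst powr_realpow) auto
    also have "\<dots> = (19/16) powr (16/3 * real 3)" by (rule powr_powr)
    also have "\<dots> = (19/16) powr (real 16)" by simp
    also have "\<dots> = (19/16)^16" by (subst powr_realpow) auto
    finally have e: "((19/16::real) powr (16/3)) ^ 3 = (19/16)^16" .
    show ?thesis
    proof (rule ccontr)
      assume "\<not> ?thesis"
      then have "((19/16::real) powr (16/3)) ^ 3 < 2^3"
        by (intro power_strict_mono) auto
      moreover have "(8::real) \<le> (19/16)^16" by (simp add: power_divide)
      ultimately show False using e by simp
    qed
  qed
  have growA: "real k ^ lmax \<le> (19/16) powr A"
  proof -
    have "real k ^ lmax = (2 powr log 2 (real k)) powr real lmax"
      using k1 by (simp add: powr_realpow)
    also have "\<dots> = 2 powr (real lmax * log 2 (real k))"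
      by (simp add: powr_powr mult.commute)
    also have "\<dots> \<le> ((19/16) powr (16/3)) powr (real lmax * log 2 (real k))"
      using base logk by (intro powr_mono2) auto
    also have "\<dots> = (19/16) powr A" by (simp add: powr_powr A_def mult.assoc)
    finally show ?thesis .
  qed
  have vN1: "1/2 \<le> vs a N1"
  proof -
    have "(19/16) powr A \<le> (19/16) powr real N1" using N1A by (intro powr_mono) auto
    then have "real k ^ lmax \<le> (19/16) ^ N1" using growA by (simp add: powr_realpow)
    then have "a * real k ^ lmax \<le> a * (19/16) ^ N1" using a_pos by simp
    moreover have "a * real k ^ lmax = sk" using kl_pos by (simp add: a_def)
    ultimately have "1/2 \<le> a * (19/16) ^ N1" using sk1 by linarith
    then show ?thesis using vs_grow[OF a_pos a_le, of N1] by linarith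
  qed
  show ?thesis
  proof (intro allI impI conjI ballI)
    fix t assume ts: "\<sigma> \<le> real t"
    have e12: "12 / \<epsilon> \<ge> 12" using eps by (simp add: field_simps)
    have tN: "N1 \<le> t" using ts sig N1A C0 e12 by linarith
    define m where "m = t - N1"
    have tm: "t = N1 + m" using tN by (simp add: m_def)
    have mge: "real m \<ge> 12 / \<epsilon> + C - 1" using ts sig N1A tm by simp
    {
      fix i assume iF: "i \<in> F"
      show "w t i \<le> 1 / sqrt (real k)"
        using wF[of t] iF vb[of t] sk_pos by (simp add: sk_def[symmetric] divide_right_mono)
      have d: "1 - vs a t \<le> (1/2) * (13/16)^m"
      proof -
        have "1 - vs a t \<le> (1 - vs a N1) * (13/16)^m"
          using vs_conv[OF a_pos a_le vN1, of m] tm by simp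
        also have "\<dots> \<le> (1/2) * (13/16)^m" using vN1 by (intro mult_right_mono) auto
        finally show ?thesis .
      qed
      have pm: "(13/16::real)^m \<le> \<epsilon>"
      proof -
        have "1 + real m * (3/13) \<le> (1 + 3/13::real)^m" by (rule Bernoulli_inequality) simp
        moreover have "real m \<ge> 11 / \<epsilon>"
        proof -
          have "1 \<le> 1 / \<epsilon>" using eps by simp
          moreover have "12 / \<epsilon> - 1 / \<epsilon> = 11 / \<epsilon>" by (simp add: diff_divide_distrib[symmetric])
          ultimately show ?thesis using mge C0 by linarith
        qed
        then have "1 / \<epsilon> \<le> 1 + real m * (3/13)" using eps by (simp add: field_simps)
        ultimately have "1 / \<epsilon> \<le> (16/13)^m" by simp
        then have "inverse ((16/13::real)^m) \<le> \<epsilon>" using eps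
          by (metis inverse_eq_divide inverse_inverse_eq le_imp_inverse_le one_divide_eq_0_iff zero_less_divide_1_iff)
        then show ?thesis by (simp add: power_inverse[symmetric] inverse_eq_divide power_divide)
      qed
      have "1 - \<epsilon>/2 \<le> vs a t" using d pm by linarith
      moreover have "1 / (1 + \<epsilon>) \<le> 1 - \<epsilon>/2" using eps
        by (simp add: field_simps)
      ultimately have "1 / (1 + \<epsilon>) \<le> vs a t" by linarith
      then have "1 / (1 + \<epsilon>) / sk \<le> vs a t / sk" using sk_pos by (intro divide_right_mono) auto
      then show "1 / ((1 + \<epsilon>) * sqrt (real k)) \<le> w t i"
        using wF[of t] iF by (simp add: sk_def)
    }
    {
      fix i assume iN: "i \<in> {1..n} - F"
      have wb: "0 \<le> w s i \<and> w s i \<le> 1 / real k ^ lmax" for s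
      proof (induction s)
        case 0 then show ?case using w0 iN by simp
      next
        case (Suc s)
        have "(vs a s)^2 \<le> 1" using vb[of s] by (simp add: power_le_one)
        then have f: "0 \<le> 1 - (vs a s)^2/4" "1 - (vs a s)^2/4 \<le> 1" by auto
        have "w s i * (1 - (vs a s)^2/4) \<le> w s i" using Suc f by (intro mult_left_le) auto
        moreover have "0 \<le> w s i * (1 - (vs a s)^2/4)" using Suc f by (intro mult_nonneg_nonneg) auto
        ultimately show ?case using wN[OF iN, of s] Suc by simp
      qed
      have wd: "w (N1 + j) i \<le> (1 / real k ^ lmax) * (15/16)^j" for j
      proof (induction j)
        case 0 then show ?case using wb[of N1] by simp
      next
        case (Suc j)
        have vj: "1/2 \<le> vs a (N1 + j)" using vN1 vs_mono[OF a_pos a_le, of N1 "N1 + j"] by simp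
        have "(1/2) * (1/2) \<le> vs a (N1 + j) * vs a (N1 + j)" using vj by (intro mult_mono) auto
        then have f: "1 - (vs a (N1 + j))^2/4 \<le> 15/16" by (simp add: power2_eq_square)
        have "w (N1 + Suc j) i = w (N1 + j) i * (1 - (vs a (N1 + j))^2 / 4)"
          using wN[OF iN] by simp
        also have "\<dots> \<le> w (N1 + j) i * (15/16)" using f wb by (intro mult_left_mono) auto
        also have "\<dots> \<le> (1 / real k ^ lmax) * (15/16)^j * (15/16)" using Suc by simp
        finally show ?case by simp
      qed
      have kb: "real k ^ b \<le> (16/15)^m"
      proof -
        have "real k ^ b = ((16/15) powr log (16/15) (real k)) powr real b"
          using k1 by (simp add: powr_realpow)
        also have "\<dots> = (16/15) powr C"
          by (simp add: powr_powr C_def log_def field_simps)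
        also have "\<dots> \<le> (16/15) powr real m" using mge e12 by (intro powr_mono) auto
        also have "\<dots> = (16/15)^m" by (simp add: powr_realpow)
        finally show ?thesis .
      qed
      have "(15/16::real)^m \<le> 1 / real k ^ b"
      proof -
        have "(15/16::real)^m = 1 / (16/15)^m" by (simp add: power_divide)
        also have "\<dots> \<le> 1 / real k ^ b" using kb k1 by (intro divide_left_mono) auto
        finally show ?thesis .
      qed
      then have "(1 / real k ^ lmax) * (15/16)^m \<le> (1 / real k ^ lmax) * (1 / real k ^ b)"
        using kl_pos by (intro mult_left_mono) auto
      then show "w t i \<le> 1 / real k ^ (lmax + b)"
        using wd[of m] tm by (simp add: power_add)
    }
  qed
qed

end
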